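(* Let $a=\{a_1,\dots,a_m\}$ be a set of positive integers and $n\ge 0$. There exist a function $P:\mathbb{Z}_{\ge 0}\to\mathbb{Q}$ and an integer $N$ such that for every $s\ge1$ and all integers $k_1,\dots,k_s\ge N$, the number of $n$-element independent sets of the disjoint union $\overline{F}(a,k_1)+\overline{F}(a,k_2)+\cdots+\overline{F}(a,k_s)$ equals $P(k_1+\cdots+k_s)$. In other words, this number depends only on $a$, $n$ and $\sum_ik_i$.
   Context: For a set $a=\{a_1,\dots,a_m\}$ of positive integers and a positive integer $k$, $F(a,k)$ is the simple graph with vertex set $\mathbb{Z}/k\mathbb{Z}$ in which distinct vertices $i,j$ are adjacent if and only if $i-j\equiv a_r\pmod k$ or $j-i\equiv a_r\pmod k$ for some $1\le r\le m$. $\overline{F}(a,k)$ is the graph obtained from $F(a,k)$ by adding $k$ new vertices $v'$, one for each vertex $v$ of $F(a,k)$, with a single new edge joining $v'$ to $v$ (so each new vertex has degree $1$). $G_1+\cdots+G_s$ denotes the disjoint union of graphs. An independent set is a set of vertices no two of which are adjacent. *)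

theory Defs
  imports Complex_Main "HOL-Number_Theory.Cong"
begin

text \<open>A simple graph: a vertex set together with a (symmetric, irreflexive) adjacency relation.\<close>
type_synonym 'v graph = "'v set \<times> ('v \<Rightarrow> 'v \<Rightarrow> bool)"

definition verts :: "'v graph \<Rightarrow> 'v set" where "verts G = fst G"
definition adj :: "'v graph \<Rightarrow> 'v \<Rightarrow> 'v \<Rightarrow> bool" where "adj G = snd G"

text \<open>F(a,k): vertex set Z/kZ represented by {0..<k}; distinct i j adjacent iff
  i - j = a_r or j - i = a_r (mod k) for some r.\<close>
definition F :: "nat set \<Rightarrow> nat \<Rightarrow> nat graph" where
  "F a k = ({0..<k}, \<lambda>i j. i \<noteq> j \<and>
      (\<exists>r\<in>a. [int i - int j = int r] (mod int k) \<or> [int j - int i = int r] (mod int k)))"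

text \<open>Fbar G: add a pendant vertex (v, True) for every vertex v = (v, False).\<close>
definition Fbar :: "'v graph \<Rightarrow> ('v \<times> bool) graph" where
  "Fbar G = (verts G \<times> UNIV, \<lambda>(u,b) (v,c).
      (\<not> b \<and> \<not> c \<and> adj G u v) \<or> (u = v \<and> b \<noteq> c))"

definition disj_union :: "(nat \<Rightarrow> 'v graph) \<Rightarrow> nat \<Rightarrow> (nat \<times> 'v) graph" where
  "disj_union G s = (SIGMA t:{..<s}. verts (G t),
      \<lambda>(t,u) (t',v). t = t' \<and> adj (G t) u v)"

definition independent_set :: "'v graph \<Rightarrow> 'v set \<Rightarrow> bool" where
  "independent_set G S \<longleftrightarrow> S \<subseteq> verts G \<and> (\<forall>x\<in>S. \<forall>y\<in>S. \<not> adj G x y)"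

definition num_indep :: "'v graph \<Rightarrow> nat \<Rightarrow> nat" where
  "num_indep G n = card {S. independent_set G S \<and> card S = n}"

end

theory Submission
  imports Defs
begin


definition indepG :: "('v \<Rightarrow> 'v \<Rightarrow> bool) \<Rightarrow> 'v set \<Rightarrow> bool" where
  "indepG A S \<longleftrightarrow> (\<forall>x\<in>S. \<forall>y\<in>S. \<not> A x y)"

definition ZZ :: "'v set \<Rightarrow> ('v \<Rightarrow> 'v \<Rightarrow> bool) \<Rightarrow> 'v set \<Rightarrow> nat \<Rightarrow> rat" where
  "ZZ V A W m = of_nat (card {T. T \<subseteq> V - W \<and> indepG A T \<and> card T = m})"

definition NB :: "'v set \<Rightarrow> ('v \<Rightarrow> 'v \<Rightarrow> bool) \<Rightarrow> 'v set \<Rightarrow> 'v set" where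
  "NB V A X = X \<union> {w\<in>V. \<exists>x\<in>X. A x w}"

lemma alt_sum_Pow:
  assumes "finite B"
  shows "(\<Sum>X\<in>Pow B. (-1::rat) ^ card X) = (if B = {} then 1 else 0)"
  using assms
proof (induction B rule: finite_induct)
  case empty then show ?case by simp
next
  case (insert b B)
  have "Pow (insert b B) = Pow B \<union> insert b ` Pow B" by (simp add: Pow_insert)
  moreover have "Pow B \<inter> insert b ` Pow B = {}" using insert by auto
  moreover have "inj_on (insert b) (Pow B)" using insert by (auto simp: inj_on_def) 
  ultimately have "(\<Sum>X\<in>Pow (insert b B). (-1::rat) ^ card X)
     = (\<Sum>X\<in>Pow B. (-1::rat) ^ card X) + (\<Sum>X\<in>Pow B. (-1::rat) ^ card (insert b X))"
    using insert by (simp add: sum.union_disjoint sum.reindex)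
  also have "(\<Sum>X\<in>Pow B. (-1::rat) ^ card (insert b X)) = - (\<Sum>X\<in>Pow B. (-1::rat) ^ card X)"
    apply (subst sum_negf[symmetric])
    apply (rule sum.cong[OF refl])
    using insert by (auto simp: finite_subset card_insert_if)
  finally show ?case by simp
qed

lemma count_superset:
  assumes fin: "finite V" and sym: "\<And>x y. A x y = A y x"
    and XV: "X \<subseteq> V" and ind: "indepG A X" and cX: "card X \<le> m"
  shows "card {T. T \<subseteq> V \<and> indepG A T \<and> card T = m \<and> X \<subseteq> T}
       = card {T. T \<subseteq> V - NB V A X \<and> indepG A T \<and> card T = m - card X}"
proof -
  have finX: "finite X" using XV fin finite_subset by blast
  have "bij_betw (\<lambda>T. T - X) {T. T \<subseteq> V \<and> indepG A T \<and> card T = m \<and> X \<subseteq> T}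
       {T. T \<subseteq> V - NB V A X \<and> indepG A T \<and> card T = m - card X}"
  proof (rule bij_betw_byWitness[where f'="\<lambda>T. T \<union> X"])
    show "\<forall>T\<in>{T. T \<subseteq> V \<and> indepG A T \<and> card T = m \<and> X \<subseteq> T}. T - X \<union> X = T" by auto
    show "\<forall>T\<in>{T. T \<subseteq> V - NB V A X \<and> indepG A T \<and> card T = m - card X}. T \<union> X - X = T"
      by (auto simp: NB_def)
    show "(\<lambda>T. T - X) ` {T. T \<subseteq> V \<and> indepG A T \<and> card T = m \<and> X \<subseteq> T}
        \<subseteq> {T. T \<subseteq> V - NB V A X \<and> indepG A T \<and> card T = m - card X}"
    proof clarify
      fix T assume T: "T \<subseteq> V" "indepG A T" "m = card T" "X \<subseteq> T"
      have fT: "finite T" using T fin finite_subset by blast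
      show "T - X \<subseteq> V - NB V A X \<and> indepG A (T - X) \<and> card (T - X) = card T - card X"
        using T fT finX by (auto simp: NB_def indepG_def card_Diff_subset)
    qed
    show "(\<lambda>T. T \<union> X) ` {T. T \<subseteq> V - NB V A X \<and> indepG A T \<and> card T = m - card X}
        \<subseteq> {T. T \<subseteq> V \<and> indepG A T \<and> card T = m \<and> X \<subseteq> T}"
    proof clarify
      fix T assume T: "T \<subseteq> V - NB V A X" "indepG A T" "card T = m - card X"
      have fT: "finite T" using T fin finite_subset by blast
      have dj: "T \<inter> X = {}" using T by (auto simp: NB_def)
      have "indepG A (T \<union> X)"
        unfolding indepG_def
      proof (intro ballI)
        fix x y assume x: "x \<in> T \<union> X" and y: "y \<in> T \<union> X"
        have nb: "\<And>w z. w \<in> T \<Longrightarrow> z \<in> X \<Longrightarrow> \<not> A z w"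
          using T(1) by (auto simp: NB_def)
        show "\<not> A x y"
          using x y T(2) ind nb[of x y] nb[of y x] sym[of x y] unfolding indepG_def by blast
      qed
      moreover have "card (T \<union> X) = m" using T dj fT finX cX by (simp add: card_Un_disjoint)
      ultimately show "T \<union> X \<subseteq> V \<and> indepG A (T \<union> X) \<and> card (T \<union> X) = m \<and> X \<subseteq> T \<union> X"
        using T XV by auto
    qed
  qed
  then show ?thesis by (rule bij_betw_same_card)
qed

lemma finite_indep_sets: "finite V \<Longrightarrow> finite {T. T \<subseteq> V \<and> P T}"
  by (rule finite_subset[of _ "Pow V"]) auto

lemma IE_step:
  assumes fin: "finite V" and sym: "\<And>x y. A x y = A y x" and WV: "W \<subseteq> V"
  shows "ZZ V A W m = ZZ V A {} m + (\<Sum>X\<in>{X. X \<subseteq> W \<and> 0 < card X \<and> card X \<le> m \<and> indepG A X}.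
            (-1) ^ card X * ZZ V A (NB V A X) (m - card X))"
proof -
  define TT where "TT = {T. T \<subseteq> V \<and> indepG A T \<and> card T = m}"
  define g where "g X = (-1::rat) ^ card X * of_nat (card {T. T \<subseteq> V \<and> indepG A T \<and> card T = m \<and> X \<subseteq> T})" for X
  have finTT: "finite TT" unfolding TT_def using fin by (rule finite_indep_sets)
  have finW: "finite W" using WV fin finite_subset by blast
  have A: "ZZ V A W m = (\<Sum>X\<in>Pow W. g X)"
  proof -
    have "ZZ V A W m = of_nat (card {T\<in>TT. T \<inter> W = {}})"
      unfolding ZZ_def TT_def by (rule arg_cong[where f="\<lambda>S. of_nat (card S)"]) auto
    also have "\<dots> = (\<Sum>T\<in>TT. if T \<inter> W = {} then 1 else 0)"
    proof -
      have "(\<Sum>T\<in>TT. if T \<inter> W = {} then (1::rat) else 0) = (\<Sum>T\<in>{T\<in>TT. T \<inter> W = {}}. 1)"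
        using finTT by (rule sum.inter_filter[symmetric])
      then show ?thesis by simp
    qed
    also have "\<dots> = (\<Sum>T\<in>TT. \<Sum>X\<in>Pow (W \<inter> T). (-1::rat) ^ card X)"
      apply (rule sum.cong[OF refl])
      using finW by (subst alt_sum_Pow) (auto)
    also have "\<dots> = (\<Sum>T\<in>TT. \<Sum>X\<in>Pow W. if X \<subseteq> T then (-1::rat) ^ card X else 0)"
    proof (rule sum.cong[OF refl])
      fix T assume "T \<in> TT"
      have "{X\<in>Pow W. X \<subseteq> T} = Pow (W \<inter> T)" by auto
      then show "(\<Sum>X\<in>Pow (W \<inter> T). (-1::rat) ^ card X) = (\<Sum>X\<in>Pow W. if X \<subseteq> T then (-1::rat) ^ card X else 0)"
        using finW by (simp add: sum.inter_filter[symmetric])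
    qed
    also have "\<dots> = (\<Sum>X\<in>Pow W. \<Sum>T\<in>TT. if X \<subseteq> T then (-1::rat) ^ card X else 0)"
      by (rule sum.swap)
    also have "\<dots> = (\<Sum>X\<in>Pow W. g X)"
    proof (rule sum.cong[OF refl])
      fix X
      have "(\<Sum>T\<in>TT. if X \<subseteq> T then (-1::rat) ^ card X else 0) = (\<Sum>T\<in>{T\<in>TT. X \<subseteq> T}. (-1::rat) ^ card X)"
        using finTT by (rule sum.inter_filter[symmetric])
      also have "\<dots> = g X" unfolding g_def TT_def by (simp add: conj_assoc)
      finally show "(\<Sum>T\<in>TT. if X \<subseteq> T then (-1::rat) ^ card X else 0) = g X" .
    qed
    finally show ?thesis .
  qed
  have B: "(\<Sum>X\<in>Pow W. g X) = g {} + (\<Sum>X\<in>Pow W - {{}}. g X)"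
    using finW by (subst sum.remove[of _ "{}"]) auto
  have g0: "g {} = ZZ V A {} m" unfolding g_def ZZ_def by simp
  let ?S = "{X. X \<subseteq> W \<and> 0 < card X \<and> card X \<le> m \<and> indepG A X}"
  have C: "(\<Sum>X\<in>Pow W - {{}}. g X) = (\<Sum>X\<in>?S. g X)"
  proof (rule sum.mono_neutral_right)
    show "finite (Pow W - {{}})" using finW by simp
    show "?S \<subseteq> Pow W - {{}}" by auto
    show "\<forall>X\<in>Pow W - {{}} - ?S. g X = 0"
    proof
      fix X assume X: "X \<in> Pow W - {{}} - ?S"
      have fX: "finite X" using X finW finite_subset by blast
      have "0 < card X" using X fX by auto
      then have "\<not> (card X \<le> m \<and> indepG A X)" using X by auto
      then have E: "{T. T \<subseteq> V \<and> indepG A T \<and> card T = m \<and> X \<subseteq> T} = {}"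
      proof (auto)
        fix T assume "T \<subseteq> V" "X \<subseteq> T" "\<not> card X \<le> card T"
        then show False using fin by (meson card_mono finite_subset)
      next
        fix T assume "T \<subseteq> V" "indepG A T" "X \<subseteq> T" "\<not> indepG A X"
        then show False unfolding indepG_def by blast
      qed
      show "g X = 0" unfolding g_def E by simp
    qed
  qed
  have D: "(\<Sum>X\<in>?S. g X) = (\<Sum>X\<in>?S. (-1) ^ card X * ZZ V A (NB V A X) (m - card X))"
  proof (rule sum.cong[OF refl])
    fix X assume X: "X \<in> ?S"
    then show "g X = (-1) ^ card X * ZZ V A (NB V A X) (m - card X)"
      unfolding g_def ZZ_def using count_superset[OF fin sym, where X=X and m=m] WV by auto
  qed
  show ?thesis using A B g0 C D by simp
qed

definition NM :: "('m \<Rightarrow> 'm \<Rightarrow> bool) \<Rightarrow> 'm set \<Rightarrow> 'm set" where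
  "NM MA X = X \<union> {q. \<exists>x\<in>X. MA x q}"

function Psi :: "('m \<Rightarrow> 'm \<Rightarrow> bool) \<Rightarrow> 'm set \<Rightarrow> nat \<Rightarrow> (nat \<Rightarrow> rat) \<Rightarrow> rat" where
  "Psi MA W m z = z m + (\<Sum>X\<in>{X. X \<subseteq> W \<and> 0 < card X \<and> card X \<le> m \<and> indepG MA X}.
       (-1) ^ card X * Psi MA (NM MA X) (m - card X) z)"
  by pat_completeness auto
termination by (relation "measure (\<lambda>(MA,W,m,z). m)") auto

declare Psi.simps[simp del]

lemma Psi_dep:
  "(\<And>i. i \<le> m \<Longrightarrow> z i = z' i) \<Longrightarrow> Psi MA W m z = Psi MA W m z'"
proof (induction MA W m z rule: Psi.induct)
  case (1 MA W m z)
  show ?case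
    apply (subst (1 2) Psi.simps)
    apply (rule arg_cong2[where f="(+)"])
    using 1(2) apply simp
    apply (rule sum.cong[OF refl])
    apply (subst 1(1))
    using 1(2) by auto
qed

definition BB :: "nat \<Rightarrow> (int \<times> bool) set" where
  "BB r = {p. \<bar>fst p\<bar> \<le> int r}"

lemma finite_BB: "finite (BB r)"
  by (rule finite_subset[of _ "{-int r..int r} \<times> UNIV"]) (auto simp: BB_def)

lemma BB_mono: "r \<le> r' \<Longrightarrow> BB r \<subseteq> BB r'"
  by (auto simp: BB_def)

lemma transfer_nb:
  fixes e :: "int \<times> bool \<Rightarrow> 'v"
  assumes h2: "\<forall>p\<in>BB ((n+1)*D). e p \<in> V"
    and h4: "\<forall>p\<in>BB ((n+1)*D). \<forall>q\<in>BB ((n+1)*D). A (e p) (e q) = MA p q"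
    and h5: "\<forall>r p q. p \<in> BB r \<longrightarrow> MA p q \<longrightarrow> q \<in> BB (r + D)"
    and h6: "\<forall>p\<in>BB (n*D). \<forall>w\<in>V. A (e p) w \<longrightarrow> (\<exists>q. MA p q \<and> w = e q)"
    and X: "X \<subseteq> BB (n*D)"
  shows "NB V A (e ` X) = e ` (NM MA X)"
proof -
  have L: "(n+1)*D = n*D + D" by simp
  have X': "X \<subseteq> BB ((n+1)*D)" using X BB_mono[of "n*D" "(n+1)*D"] by auto
  have NMX: "NM MA X \<subseteq> BB ((n+1)*D)" using X' X h5 unfolding NM_def L by blast
  show ?thesis
  proof
    show "NB V A (e ` X) \<subseteq> e ` NM MA X"
    proof
      fix w assume "w \<in> NB V A (e ` X)"
      then consider "w \<in> e ` X" | p where "p \<in> X" "w \<in> V" "A (e p) w" unfolding NB_def by blast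
      then show "w \<in> e ` NM MA X"
      proof cases
        case 1 then show ?thesis unfolding NM_def by blast
      next
        case 2
        then obtain q where "MA p q" "w = e q" using h6 X by blast
        then show ?thesis using 2 unfolding NM_def by blast
      qed
    qed
    show "e ` NM MA X \<subseteq> NB V A (e ` X)"
    proof
      fix w assume "w \<in> e ` NM MA X"
      then obtain q where q: "q \<in> NM MA X" "w = e q" by blast
      then consider "q \<in> X" | p where "p \<in> X" "MA p q" unfolding NM_def by blast
      then show "w \<in> NB V A (e ` X)"
      proof cases
        case 1 then show ?thesis using q unfolding NB_def by blast
      next
        case 2
        have "q \<in> BB ((n+1)*D)" using q NMX by blast
        moreover have "p \<in> BB ((n+1)*D)" using 2 X' by blast
        ultimately have "A (e p) (e q)" "e q \<in> V" using h4 h2 2 by auto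
        then show ?thesis using q 2 unfolding NB_def by blast
      qed
    qed
  qed
qed

lemma transfer:
  fixes e :: "int \<times> bool \<Rightarrow> 'v"
  assumes fin: "finite V" and sym: "\<And>x y. A x y = A y x"
    and h2: "\<forall>p\<in>BB ((n+1)*D). e p \<in> V"
    and h3: "inj_on e (BB ((n+1)*D))"
    and h4: "\<forall>p\<in>BB ((n+1)*D). \<forall>q\<in>BB ((n+1)*D). A (e p) (e q) = MA p q"
    and h5: "\<forall>r p q. p \<in> BB r \<longrightarrow> MA p q \<longrightarrow> q \<in> BB (r + D)"
    and h6: "\<forall>p\<in>BB (n*D). \<forall>w\<in>V. A (e p) w \<longrightarrow> (\<exists>q. MA p q \<and> w = e q)"
  shows "m \<le> n \<Longrightarrow> W \<subseteq> BB ((n+1-m)*D) \<Longrightarrow> ZZ V A (e ` W) m = Psi MA W m (ZZ V A {})"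
proof (induction m arbitrary: W rule: less_induct)
  case (less m)
  define L where "L = (n+1)*D"
  have "(n+1-m)*D \<le> (n+1)*D" by (rule mult_le_mono1) simp
  then have WL: "W \<subseteq> BB L" using less(3) BB_mono[of "(n+1-m)*D" L] unfolding L_def by blast
  have injW: "inj_on e W" using h3 WL inj_on_subset unfolding L_def by blast
  have eWV: "e ` W \<subseteq> V" using h2 WL unfolding L_def by blast
  let ?SX = "{X. X \<subseteq> W \<and> 0 < card X \<and> card X \<le> m \<and> indepG MA X}"
  let ?SY = "{Y. Y \<subseteq> e ` W \<and> 0 < card Y \<and> card Y \<le> m \<and> indepG A Y}"
  have cardX: "card (e ` X) = card X" if "X \<subseteq> W" for X
    using injW that by (meson card_image inj_on_subset)
  have h4': "A (e p) (e q) = MA p q" if "p \<in> W" "q \<in> W" for p q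
    using h4 WL that unfolding L_def by blast
  have indX: "indepG A (e ` X) = indepG MA X" if "X \<subseteq> W" for X
  proof -
    have "indepG A (e ` X) = (\<forall>x\<in>X. \<forall>y\<in>X. \<not> A (e x) (e y))" unfolding indepG_def by simp
    also have "\<dots> = (\<forall>x\<in>X. \<forall>y\<in>X. \<not> MA x y)" using that h4' by (meson subsetD)
    finally show ?thesis unfolding indepG_def .
  qed
  have SY: "?SY = (image e) ` ?SX"
  proof
    show "?SY \<subseteq> (image e) ` ?SX"
    proof
      fix Y assume Y: "Y \<in> ?SY"
      then obtain X where X: "X \<subseteq> W" "Y = e ` X" by (auto simp: subset_image_iff)
      then show "Y \<in> (image e) ` ?SX" using Y cardX indX by auto
    qed
    show "(image e) ` ?SX \<subseteq> ?SY" using cardX indX by auto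
  qed
  have injS: "inj_on (image e) ?SX"
    using inj_on_image_Pow[OF injW] by (rule inj_on_subset) auto
  have "ZZ V A (e ` W) m = ZZ V A {} m + (\<Sum>Y\<in>?SY. (-1) ^ card Y * ZZ V A (NB V A Y) (m - card Y))"
    by (rule IE_step[OF fin sym eWV])
  also have "(\<Sum>Y\<in>?SY. (-1) ^ card Y * ZZ V A (NB V A Y) (m - card Y))
      = (\<Sum>X\<in>?SX. (-1) ^ card (e ` X) * ZZ V A (NB V A (e ` X)) (m - card (e ` X)))"
    unfolding SY by (rule sum.reindex[OF injS, unfolded comp_def])
  also have "\<dots> = (\<Sum>X\<in>?SX. (-1) ^ card X * Psi MA (NM MA X) (m - card X) (ZZ V A {}))"
  proof (rule sum.cong[OF refl])
    fix X assume X: "X \<in> ?SX"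
    have m1: "1 \<le> m" using X by auto
    have "(n+1-m)*D \<le> n*D" by (rule mult_le_mono1) (use m1 in simp)
    then have XB: "X \<subseteq> BB (n*D)"
      using X less(3) BB_mono[of "(n+1-m)*D" "n*D"] by blast
    have nb: "NB V A (e ` X) = e ` (NM MA X)"
      by (rule transfer_nb[OF h2 h4 h5 h6 XB])
    have XW': "X \<subseteq> BB ((n+1-m)*D)" using X less(3) by blast
    have sub: "NM MA X \<subseteq> BB ((n+1-m)*D + D)"
    proof
      fix q assume "q \<in> NM MA X"
      then consider "q \<in> X" | p where "p \<in> X" "MA p q" unfolding NM_def by blast
      then show "q \<in> BB ((n+1-m)*D + D)"
      proof cases
        case 1 then show ?thesis using XW' BB_mono[of "(n+1-m)*D" "(n+1-m)*D + D"] by auto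
      next
        case 2 then show ?thesis using XW' h5 by blast
      qed
    qed
    have "(n+1-m)*D + D \<le> (n+1-(m - card X))*D"
    proof -
      have "(n+1-m) + 1 \<le> n+1-(m - card X)" using X less(2) by auto
      then have "((n+1-m) + 1)*D \<le> (n+1-(m - card X))*D" by (rule mult_le_mono1)
      then show ?thesis by simp
    qed
    then have sub2: "NM MA X \<subseteq> BB ((n+1-(m - card X))*D)" using sub BB_mono by blast
    have IH: "ZZ V A (e ` NM MA X) (m - card X) = Psi MA (NM MA X) (m - card X) (ZZ V A {})"
      apply (rule less(1)) using X less(2) sub2 by auto
    show "(-1) ^ card (e ` X) * ZZ V A (NB V A (e ` X)) (m - card (e ` X))
        = (-1) ^ card X * Psi MA (NM MA X) (m - card X) (ZZ V A {})"
      using cardX[of X] X nb IH by simp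
  qed
  also have "ZZ V A {} m + \<dots> = Psi MA W m (ZZ V A {})"
    by (subst (2) Psi.simps) simp
  finally show ?case .
qed



lemma mod_small0: "(k::int) > 0 \<Longrightarrow> \<bar>d\<bar> < k \<Longrightarrow> d mod k = 0 \<Longrightarrow> d = 0"
  by (smt (verit) mod_add_self1 mod_pos_pos_trivial)

lemma cong_small: "(k::int) > 0 \<Longrightarrow> \<bar>x - y\<bar> < k \<Longrightarrow> [x = y] (mod k) \<Longrightarrow> x = y"
  using mod_small0[of k "x - y"] by (simp add: cong_iff_dvd_diff dvd_eq_mod_eq_0)

lemma rooted_count:
  assumes fin: "finite V" and sym: "\<And>x y. A x y = A y x" and v: "v \<in> V" "\<not> A v v" and j: "1 \<le> j"
  shows "of_nat (card {S. S \<subseteq> V \<and> indepG A S \<and> card S = j \<and> v \<in> S}) = ZZ V A (NB V A {v}) (j - 1)"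
proof -
  have "{S. S \<subseteq> V \<and> indepG A S \<and> card S = j \<and> v \<in> S} = {T. T \<subseteq> V \<and> indepG A T \<and> card T = j \<and> {v} \<subseteq> T}"
    by auto
  moreover have "card {T. T \<subseteq> V \<and> indepG A T \<and> card T = j \<and> {v} \<subseteq> T}
       = card {T. T \<subseteq> V - NB V A {v} \<and> indepG A T \<and> card T = j - card {v}}"
    by (rule count_superset[OF fin sym]) (use v j in \<open>auto simp: indepG_def\<close>)
  ultimately show ?thesis unfolding ZZ_def by simp
qed

lemma double_count:
  assumes fin: "finite V"
  shows "of_nat j * ZZ V A {} j = (\<Sum>v\<in>V. of_nat (card {S. S \<subseteq> V \<and> indepG A S \<and> card S = j \<and> v \<in> S}))"
proof -
  define TT where "TT = {S. S \<subseteq> V \<and> indepG A S \<and> card S = j}"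
  have finTT: "finite TT" unfolding TT_def using fin by (rule finite_indep_sets)
  have "(\<Sum>v\<in>V. card {S. S \<subseteq> V \<and> indepG A S \<and> card S = j \<and> v \<in> S})
      = (\<Sum>v\<in>V. \<Sum>S\<in>TT. if v \<in> S then 1 else (0::nat))"
  proof (rule sum.cong[OF refl])
    fix v
    have "(\<Sum>S\<in>TT. if v \<in> S then 1 else (0::nat)) = card {S\<in>TT. v \<in> S}"
      using finTT by (simp add: sum.inter_filter[symmetric])
    then show "card {S. S \<subseteq> V \<and> indepG A S \<and> card S = j \<and> v \<in> S} = (\<Sum>S\<in>TT. if v \<in> S then 1 else (0::nat))"
      unfolding TT_def by (simp add: conj_assoc)
  qed
  also have "\<dots> = (\<Sum>S\<in>TT. \<Sum>v\<in>V. if v \<in> S then 1 else (0::nat))" by (rule sum.swap)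
  also have "\<dots> = (\<Sum>S\<in>TT. j)"
  proof (rule sum.cong[OF refl])
    fix S assume S: "S \<in> TT"
    have "(\<Sum>v\<in>V. if v \<in> S then 1 else (0::nat)) = card {v\<in>V. v \<in> S}"
      using fin by (simp add: sum.inter_filter[symmetric])
    also have "{v\<in>V. v \<in> S} = S" using S unfolding TT_def by auto
    finally show "(\<Sum>v\<in>V. if v \<in> S then 1 else (0::nat)) = j" using S unfolding TT_def by simp
  qed
  also have "\<dots> = j * card TT" by simp
  finally have E: "(\<Sum>v\<in>V. card {S. S \<subseteq> V \<and> indepG A S \<and> card S = j \<and> v \<in> S}) = j * card TT" .
  have "(\<Sum>v\<in>V. of_nat (card {S. S \<subseteq> V \<and> indepG A S \<and> card S = j \<and> v \<in> S}) :: rat)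
       = of_nat (\<Sum>v\<in>V. card {S. S \<subseteq> V \<and> indepG A S \<and> card S = j \<and> v \<in> S})" by simp
  also have "\<dots> = of_nat j * ZZ V A {} j" unfolding E ZZ_def TT_def by simp
  finally show ?thesis by simp
qed



definition MAa :: "nat set \<Rightarrow> int \<times> bool \<Rightarrow> int \<times> bool \<Rightarrow> bool" where
  "MAa a = (\<lambda>(x,b) (y,c). (\<not> b \<and> \<not> c \<and> x \<noteq> y \<and> (\<exists>r\<in>a. x - y = int r \<or> y - x = int r)) \<or> (x = y \<and> b \<noteq> c))"

definition emb :: "(nat \<Rightarrow> nat) \<Rightarrow> nat \<Rightarrow> nat \<Rightarrow> int \<times> bool \<Rightarrow> nat \<times> (nat \<times> bool)" where
  "emb k t u = (\<lambda>(x,b). (t, (nat ((int u + x) mod int (k t)), b)))"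

lemma verts_U: "verts (disj_union (\<lambda>i. Fbar (F a (k i))) s) = (SIGMA t:{..<s}. {0..<k t} \<times> UNIV)"
  by (simp add: disj_union_def Fbar_def F_def verts_def)

lemma adj_U: "adj (disj_union (\<lambda>i. Fbar (F a (k i))) s) (t,(i,b)) (t',(j,c)) =
   (t = t' \<and> ((\<not> b \<and> \<not> c \<and> i \<noteq> j \<and> (\<exists>r\<in>a. [int i - int j = int r] (mod int (k t)) \<or> [int j - int i = int r] (mod int (k t)))) \<or> (i = j \<and> b \<noteq> c)))"
  unfolding disj_union_def Fbar_def F_def adj_def by auto
lemma adj_U_sym: "adj (disj_union (\<lambda>i. Fbar (F a (k i))) s) x y = adj (disj_union (\<lambda>i. Fbar (F a (k i))) s) y x"
proof -
  obtain t i b where x: "x = (t,(i,b))" by (cases x) auto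
  obtain t' j c where y: "y = (t',(j,c))" by (cases y) auto
  show ?thesis unfolding x y adj_U by (auto simp: cong_sym_eq)
qed

lemma adj_U_irrefl: "\<not> adj (disj_union (\<lambda>i. Fbar (F a (k i))) s) x x"
  by (cases x) (auto simp: adj_U)

lemma mod_small0_dup: "(k::int) > 0 \<Longrightarrow> \<bar>d\<bar> < k \<Longrightarrow> d mod k = 0 \<Longrightarrow> d = 0"
  by (smt (verit) mod_add_self1 mod_pos_pos_trivial)

lemma cong_small_dup: "(k::int) > 0 \<Longrightarrow> \<bar>x - y\<bar> < k \<Longrightarrow> [x = y] (mod k) \<Longrightarrow> x = y"
  using mod_small0[of k "x - y"] by (simp add: cong_iff_dvd_diff dvd_eq_mod_eq_0)

lemma k1: "(k::int) > 0 \<Longrightarrow> \<bar>x - y\<bar> < k \<Longrightarrow> (nat ((u+x) mod k) = nat ((u+y) mod k)) \<longleftrightarrow> x = y"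
proof
  assume k: "k > 0" "\<bar>x - y\<bar> < k" and e: "nat ((u+x) mod k) = nat ((u+y) mod k)"
  have "(u+x) mod k \<ge> 0" "(u+y) mod k \<ge> 0" using k by auto
  then have "(u+x) mod k = (u+y) mod k" using e by (metis nat_eq_iff2)
  then have "[u + x = u + y] (mod k)" by (simp add: cong_def)
  then have "[x = y] (mod k)" by (rule cong_add_lcancel[THEN iffD1])
  then show "x = y" using cong_small k by blast
qed simp

lemma k2: "(k::int) > 0 \<Longrightarrow> \<bar>x - y - r\<bar> < k \<Longrightarrow>
   [int (nat ((u+x) mod k)) - int (nat ((u+y) mod k)) = r] (mod k) \<longleftrightarrow> x - y = r"
proof -
  assume k: "k > 0" "\<bar>x - y - r\<bar> < k"
  have "[int (nat ((u+x) mod k)) - int (nat ((u+y) mod k)) = r] (mod k) \<longleftrightarrow> [(u+x) mod k - (u+y) mod k = r] (mod k)"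
    using k by simp
  also have "\<dots> \<longleftrightarrow> [x - y = r] (mod k)" by (simp add: cong_def mod_diff_eq)
  also have "\<dots> \<longleftrightarrow> x - y = r" using cong_small[of k "x - y" r] k by auto
  finally show ?thesis .
qed
lemma ar1: assumes "(k::int) > 0" "0 \<le> J" "J < k" "[(u+x) mod k - J = r] (mod k)" shows "(u + (x - r)) mod k = J"
proof -
  have "[(u+x) mod k - r = J] (mod k)" using assms(4) by (simp add: cong_iff_dvd_diff algebra_simps)
  then have "((u+x) mod k - r) mod k = J" using assms by (simp add: cong_def)
  then show ?thesis by (simp add: mod_diff_left_eq add_diff_eq)
qed
lemma ar2: assumes "(k::int) > 0" "0 \<le> J" "J < k" "[J - (u+x) mod k = r] (mod k)" shows "(u + (x + r)) mod k = J"
proof -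
  have "[r = J - (u+x) mod k] (mod k)" using assms(4) by (rule cong_sym)
  then have "[(u+x) mod k + r = (u+x) mod k + (J - (u+x) mod k)] (mod k)" by (rule cong_add_lcancel[THEN iffD2])
  then have "[(u+x) mod k + r = J] (mod k)" by simp
  then have "((u+x) mod k + r) mod k = J" using assms by (simp add: cong_def)
  then show ?thesis by (simp add: mod_add_left_eq add.assoc)
qed

lemma h5_model:
  assumes fa: "finite a" and Dd: "D = (\<Sum>x\<in>a. x)"
  shows "\<forall>r p q. p \<in> BB r \<longrightarrow> MAa a p q \<longrightarrow> q \<in> BB (r + D)"
proof (intro allI impI)
  fix r p q assume p: "p \<in> BB r" and m: "MAa a p q"
  obtain x b where px: "p = (x,b)" by (cases p)
  obtain y c where qy: "q = (y,c)" by (cases q)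
  have le0: "r' \<le> D" if "r' \<in> a" for r'
    using member_le_sum[of r' a id] fa that unfolding Dd by simp
  have le: "int r' \<le> int D" if "r' \<in> a" for r' using le0[OF that] by simp
  from m consider r' where "r' \<in> a" "x - y = int r' \<or> y - x = int r'" | "x = y"
    unfolding px qy MAa_def by auto
  then show "q \<in> BB (r + D)"
  proof cases
    case 1 then show ?thesis using p le[of r'] unfolding px qy BB_def by auto
  next
    case 2 then show ?thesis using p unfolding px qy BB_def by auto
  qed
qed



lemma local_h:
  fixes a :: "nat set" and k :: "nat \<Rightarrow> nat" and s t u n D :: nat
  assumes fa: "finite a" and pos: "\<forall>x\<in>a. x > 0" and Dd: "D = (\<Sum>x\<in>a. x)"
    and kb: "int (k t) > 2 * int ((n+1) * D) + int D"
    and ts: "t < s" and uk: "u < k t"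
  shows "(\<forall>p\<in>BB ((n+1)*D). emb k t u p \<in> verts (disj_union (\<lambda>i. Fbar (F a (k i))) s))
      \<and> inj_on (emb k t u) (BB ((n+1)*D))
      \<and> (\<forall>p\<in>BB ((n+1)*D). \<forall>q\<in>BB ((n+1)*D).
            adj (disj_union (\<lambda>i. Fbar (F a (k i))) s) (emb k t u p) (emb k t u q) = MAa a p q)
      \<and> (\<forall>p\<in>BB (n*D). \<forall>w\<in>verts (disj_union (\<lambda>i. Fbar (F a (k i))) s).
            adj (disj_union (\<lambda>i. Fbar (F a (k i))) s) (emb k t u p) w \<longrightarrow> (\<exists>q. MAa a p q \<and> w = emb k t u q))"
proof (intro conjI)
  define K where "K = int (k t)"
  define L where "L = int ((n+1) * D)"
  have Kpos: "K > 0" unfolding K_def using uk by simp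
  have KL: "K > 2 * L + int D" unfolding K_def L_def using kb by simp
  have Dnn: "int D \<ge> 0" by simp
  have le0: "r \<le> D" if "r \<in> a" for r
    using member_le_sum[of r a id] fa that unfolding Dd by simp
  have le: "int r \<le> int D" if "r \<in> a" for r using le0[OF that] by simp
  have embx: "emb k t u (x,b) = (t, (nat ((int u + x) mod K), b))" for x b
    unfolding emb_def K_def by simp
  have inBB: "\<bar>x\<bar> \<le> L" if "(x,b) \<in> BB ((n+1)*D)" for x b using that unfolding BB_def L_def by simp
  show "\<forall>p\<in>BB ((n+1)*D). emb k t u p \<in> verts (disj_union (\<lambda>i. Fbar (F a (k i))) s)"
  proof
    fix p assume "p \<in> BB ((n+1)*D)"
    obtain x b where p: "p = (x,b)" by (cases p)
    have "nat ((int u + x) mod K) < k t" using Kpos unfolding K_def by (simp add: nat_less_iff)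
    then show "emb k t u p \<in> verts (disj_union (\<lambda>i. Fbar (F a (k i))) s)"
      unfolding p embx verts_U using ts by simp
  qed
  show "inj_on (emb k t u) (BB ((n+1)*D))"
  proof (rule inj_onI)
    fix p q assume pB: "p \<in> BB ((n+1)*D)" and qB: "q \<in> BB ((n+1)*D)" and e: "emb k t u p = emb k t u q"
    obtain x b where p: "p = (x,b)" by (cases p)
    obtain y c where q: "q = (y,c)" by (cases q)
    have "\<bar>x - y\<bar> < K" using inBB[of x b] inBB[of y c] pB qB KL Dnn unfolding p q by linarith
    then have "x = y" using e k1[OF Kpos, of x y "int u"] unfolding p q embx by simp
    then show "p = q" using e unfolding p q embx by simp
  qed
  show "\<forall>p\<in>BB ((n+1)*D). \<forall>q\<in>BB ((n+1)*D).
            adj (disj_union (\<lambda>i. Fbar (F a (k i))) s) (emb k t u p) (emb k t u q) = MAa a p q"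
  proof (intro ballI)
    fix p q assume pB: "p \<in> BB ((n+1)*D)" and qB: "q \<in> BB ((n+1)*D)"
    obtain x b where p: "p = (x,b)" by (cases p)
    obtain y c where q: "q = (y,c)" by (cases q)
    have xL: "\<bar>x\<bar> \<le> L" using inBB pB p by blast
    have yL: "\<bar>y\<bar> \<le> L" using inBB qB q by blast
    define i where "i = nat ((int u + x) mod K)"
    define j where "j = nat ((int u + y) mod K)"
    have E1: "(i = j) = (x = y)" unfolding i_def j_def
      by (rule k1[OF Kpos]) (use xL yL KL Dnn in linarith)
    have E2: "[int i - int j = int r] (mod int (k t)) = (x - y = int r)" if r: "r \<in> a" for r
      unfolding i_def j_def K_def[symmetric]
      by (rule k2[OF Kpos]) (use xL yL KL le[OF r] in linarith)
    have E3: "[int j - int i = int r] (mod int (k t)) = (y - x = int r)" if r: "r \<in> a" for r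
      unfolding i_def j_def K_def[symmetric]
      by (rule k2[OF Kpos]) (use xL yL KL le[OF r] in linarith)
    have E4: "(\<exists>r\<in>a. [int i - int j = int r] (mod int (k t)) \<or> [int j - int i = int r] (mod int (k t)))
        = (\<exists>r\<in>a. x - y = int r \<or> y - x = int r)" using E2 E3 by blast
    show "adj (disj_union (\<lambda>i. Fbar (F a (k i))) s) (emb k t u p) (emb k t u q) = MAa a p q"
      unfolding p q embx i_def[symmetric] j_def[symmetric] adj_U MAa_def
      using E1 E4 by auto
  qed
  show "\<forall>p\<in>BB (n*D). \<forall>w\<in>verts (disj_union (\<lambda>i. Fbar (F a (k i))) s).
            adj (disj_union (\<lambda>i. Fbar (F a (k i))) s) (emb k t u p) w \<longrightarrow> (\<exists>q. MAa a p q \<and> w = emb k t u q)"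
  proof (intro ballI impI)
    fix p w assume pB: "p \<in> BB (n*D)" and wV: "w \<in> verts (disj_union (\<lambda>i. Fbar (F a (k i))) s)"
      and ad: "adj (disj_union (\<lambda>i. Fbar (F a (k i))) s) (emb k t u p) w"
    obtain x b where p: "p = (x,b)" by (cases p)
    obtain t' j c where w: "w = (t',(j,c))" by (cases w) auto
    define i where "i = nat ((int u + x) mod K)"
    have ii: "int i = (int u + x) mod K" unfolding i_def using Kpos by simp
    from ad have tt: "t' = t" unfolding p w embx i_def[symmetric] adj_U by simp
    have jk: "j < k t" using wV unfolding w verts_U tt by simp
    have J0: "0 \<le> int j" "int j < K" using jk unfolding K_def by auto
    have ad': "(\<not> b \<and> \<not> c \<and> i \<noteq> j \<and> (\<exists>r\<in>a. [int i - int j = int r] (mod int (k t)) \<or> [int j - int i = int r] (mod int (k t)))) \<or> (i = j \<and> b \<noteq> c)"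
      using ad unfolding p w embx i_def[symmetric] adj_U tt by blast
    from ad'[folded K_def] consider r where "\<not> b" "\<not> c" "r \<in> a" "[int i - int j = int r] (mod K)"
      | r where "\<not> b" "\<not> c" "r \<in> a" "[int j - int i = int r] (mod K)"
      | "i = j" "b \<noteq> c"
      by blast
    then show "\<exists>q. MAa a p q \<and> w = emb k t u q"
    proof cases
      case 1
      have "(int u + (x - int r)) mod K = int j"
        by (rule ar1[OF Kpos J0]) (use 1 ii in simp)
      then have "w = emb k t u (x - int r, False)" unfolding w tt embx using 1 by simp
      moreover have "MAa a p (x - int r, False)" unfolding p MAa_def using 1 pos by force
      ultimately show ?thesis by blast
    next
      case 2
      have "(int u + (x + int r)) mod K = int j"
        by (rule ar2[OF Kpos J0]) (use 2 ii in simp)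
      then have "w = emb k t u (x + int r, False)" unfolding w tt embx using 2 by simp
      moreover have "MAa a p (x + int r, False)" unfolding p MAa_def using 2 pos by force
      ultimately show ?thesis by blast
    next
      case 3
      have "w = emb k t u (x, c)" unfolding w tt embx i_def[symmetric] using 3 by simp
      moreover have "MAa a p (x, c)" unfolding p MAa_def using 3 by simp
      ultimately show ?thesis by blast
    qed
  qed
qed



definition cc :: "nat set \<Rightarrow> nat \<Rightarrow> nat \<Rightarrow> (nat \<Rightarrow> rat) \<Rightarrow> rat" where
  "cc a K j f = of_nat K / of_nat j * (Psi (MAa a) (NM (MAa a) {(0,False)}) (j - 1) f
                                      + Psi (MAa a) (NM (MAa a) {(0,True)}) (j - 1) f)"

fun qs :: "nat set \<Rightarrow> nat \<Rightarrow> nat \<Rightarrow> rat list" where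
  "qs a K 0 = [1]"
| "qs a K (Suc j) = qs a K j @ [cc a K (Suc j) (\<lambda>i. qs a K j ! i)]"

definition q :: "nat set \<Rightarrow> nat \<Rightarrow> nat \<Rightarrow> rat" where
  "q a K j = qs a K j ! j"

lemma length_qs: "length (qs a K j) = Suc j"
  by (induction j) auto

lemma qs_nth: "i \<le> j \<Longrightarrow> qs a K j ! i = q a K i"
proof (induction j arbitrary: i)
  case 0 then show ?case by (simp add: q_def)
next
  case (Suc j)
  show ?case
  proof (cases "i = Suc j")
    case True then show ?thesis by (simp add: q_def)
  next
    case False
    then have "i \<le> j" using Suc by simp
    then show ?thesis using Suc length_qs[of a K j] by (simp add: nth_append)
  qed
qed

lemma q0: "q a K 0 = 1" by (simp add: q_def)

lemma q_Suc: "q a K (Suc j) = cc a K (Suc j) (q a K)"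
proof -
  have "q a K (Suc j) = cc a K (Suc j) (\<lambda>i. qs a K j ! i)"
    unfolding q_def using length_qs[of a K j] by (simp add: nth_append)
  also have "\<dots> = cc a K (Suc j) (q a K)"
    unfolding cc_def by (simp add: Psi_dep[where z="\<lambda>i. qs a K j ! i" and z'="q a K"] qs_nth)
  finally show ?thesis .
qed

lemma main_count:
  fixes a :: "nat set" and k :: "nat \<Rightarrow> nat" and s n D :: nat
  assumes fa: "finite a" and pos: "\<forall>x\<in>a. x > 0" and Dd: "D = (\<Sum>x\<in>a. x)"
    and kb: "\<forall>i<s. int (k i) > 2 * int ((n+1) * D) + int D"
  shows "j \<le> n \<Longrightarrow> ZZ (verts (disj_union (\<lambda>i. Fbar (F a (k i))) s)) (adj (disj_union (\<lambda>i. Fbar (F a (k i))) s)) {} j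
            = q a (\<Sum>i<s. k i) j"
proof (induction j rule: less_induct)
  case (less j)
  define V where "V = verts (disj_union (\<lambda>i. Fbar (F a (k i))) s)"
  define A where "A = adj (disj_union (\<lambda>i. Fbar (F a (k i))) s)"
  define K where "K = (\<Sum>i<s. k i)"
  define MA where "MA = MAa a"
  have VS: "V = (SIGMA t:{..<s}. {0..<k t} \<times> UNIV)" unfolding V_def by (rule verts_U)
  have finV: "finite V" unfolding VS by auto
  have sym: "\<And>x y. A x y = A y x" unfolding A_def by (rule adj_U_sym)
  have irr: "\<And>x. \<not> A x x" unfolding A_def by (rule adj_U_irrefl)
  have h5: "\<forall>r p q. p \<in> BB r \<longrightarrow> MA p q \<longrightarrow> q \<in> BB (r + D)"
    unfolding MA_def by (rule h5_model[OF fa Dd])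
  show ?case
  proof (cases j)
    case 0
    have "{T. T \<subseteq> V - {} \<and> indepG A T \<and> card T = 0} = {{}}"
    proof (auto simp: indepG_def)
      fix T x assume "T \<subseteq> V" "card T = 0" "x \<in> T"
      then have "finite T" using finV finite_subset by blast
      then show False using \<open>card T = 0\<close> \<open>x \<in> T\<close> by simp
    qed
    then show ?thesis unfolding 0 ZZ_def q0 V_def[symmetric] A_def[symmetric] by simp
  next
    case (Suc j')
    define z where "z = ZZ V A {}"
    define g where "g b = Psi MA (NM MA {(0,b)}) j' z" for b
    have j'n: "j' < n" using less Suc by simp
    have per_v: "of_nat (card {S. S \<subseteq> V \<and> indepG A S \<and> card S = j \<and> v \<in> S}) = g (snd (snd v))"
      if v: "v \<in> V" for v
    proof -
      obtain t u b0 where vv: "v = (t,(u,b0))" by (cases v) auto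
      have ts: "t < s" and uk: "u < k t" using v unfolding vv VS by auto
      note loc = local_h[where a=a and k=k and s=s and t=t and u=u and n=n and D=D, OF fa pos Dd kb[rule_format, OF ts] ts uk, folded V_def A_def MA_def]
      note h2 = loc[THEN conjunct1]
      note h3 = loc[THEN conjunct2, THEN conjunct1]
      note h4 = loc[THEN conjunct2, THEN conjunct2, THEN conjunct1]
      note h6 = loc[THEN conjunct2, THEN conjunct2, THEN conjunct2]
      have e0: "emb k t u (0, b0) = v" unfolding vv emb_def using uk by simp
      have oB: "{(0::int, b0)} \<subseteq> BB (n*D)" by (simp add: BB_def)
      have nb: "NB V A {v} = emb k t u ` NM MA {(0,b0)}"
        using transfer_nb[OF h2 h4 h5 h6 oB] e0 by simp
      have W1: "NM MA {(0,b0)} \<subseteq> BB (0 + D)"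
      proof
        fix p assume "p \<in> NM MA {(0,b0)}"
        then consider "p = (0,b0)" | "MA (0,b0) p" unfolding NM_def by blast
        then show "p \<in> BB (0 + D)"
        proof cases
          case 1 then show ?thesis by (simp add: BB_def)
        next
          case 2
          have "(0::int,b0) \<in> BB 0" by (simp add: BB_def)
          then show ?thesis using h5 2 by blast
        qed
      qed
      have "1 * D \<le> (n + 1 - j') * D" by (rule mult_le_mono1) (use j'n in simp)
      then have "0 + D \<le> (n + 1 - j') * D" by simp
      then have W: "NM MA {(0,b0)} \<subseteq> BB ((n+1-j')*D)" using W1 BB_mono by (meson subset_trans)
      have "of_nat (card {S. S \<subseteq> V \<and> indepG A S \<and> card S = j \<and> v \<in> S}) = ZZ V A (NB V A {v}) (j - 1)"
        by (rule rooted_count[OF finV sym v irr]) (use Suc in simp)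
      also have "\<dots> = ZZ V A (emb k t u ` NM MA {(0,b0)}) j'" using nb Suc by simp
      also have "\<dots> = Psi MA (NM MA {(0,b0)}) j' (ZZ V A {})"
        by (rule transfer[OF finV sym h2 h3 h4 h5 h6]) (use j'n in simp, fact W)
      finally show ?thesis unfolding g_def z_def vv by simp
    qed
    have "of_nat j * z j = (\<Sum>v\<in>V. of_nat (card {S. S \<subseteq> V \<and> indepG A S \<and> card S = j \<and> v \<in> S}))"
      unfolding z_def by (rule double_count[OF finV])
    also have "\<dots> = (\<Sum>v\<in>V. g (snd (snd v)))" by (rule sum.cong[OF refl]) (rule per_v)
    also have "\<dots> = (\<Sum>t<s. \<Sum>y\<in>{0..<k t} \<times> UNIV. g (snd y))"
      unfolding VS by (subst sum.Sigma) (auto simp: case_prod_beta)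
    also have "\<dots> = (\<Sum>t<s. of_nat (k t) * (g False + g True))"
    proof (rule sum.cong[OF refl])
      fix t
      have "(\<Sum>y\<in>{0..<k t} \<times> UNIV. g (snd y)) = (\<Sum>u\<in>{0..<k t}. \<Sum>b\<in>UNIV. g b)"
        by (subst sum.cartesian_product) (simp add: case_prod_beta)
      also have "\<dots> = of_nat (k t) * (g False + g True)" by (simp add: UNIV_bool add.commute)
      finally show "(\<Sum>y\<in>{0..<k t} \<times> UNIV. g (snd y)) = of_nat (k t) * (g False + g True)" .
    qed
    also have "\<dots> = of_nat K * (g False + g True)"
      unfolding K_def by (simp add: sum_distrib_right)
    finally have eq: "of_nat j * z j = of_nat K * (g False + g True)" .
    have IHz: "z i = q a K i" if "i \<le> j'" for i
    proof -
      have "i < j" "i \<le> n" using that Suc less.prems by auto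
      then show ?thesis using less.IH[of i] unfolding z_def V_def A_def K_def by simp
    qed
    have gq: "g b = Psi MA (NM MA {(0,b)}) j' (q a K)" for b
      unfolding g_def by (rule Psi_dep) (rule IHz)
    have "z j = of_nat K / of_nat j * (g False + g True)" using eq Suc by (simp add: field_simps)
    also have "\<dots> = cc a K j (q a K)" unfolding cc_def gq MA_def using Suc by simp
    also have "\<dots> = q a K j" unfolding Suc q_Suc ..
    finally show ?thesis unfolding z_def V_def A_def K_def .
  qed
qed


theorem corollary3p6:
  fixes a :: "nat set" and n :: nat
  assumes "finite a" and "\<forall>x\<in>a. x > 0"
  shows "\<exists>(P :: nat \<Rightarrow> rat) (N :: int). \<forall>s \<ge> 1. \<forall>k :: nat \<Rightarrow> nat.
           (\<forall>i<s. int (k i) \<ge> N) \<longrightarrow>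
           of_nat (num_indep (disj_union (\<lambda>i. Fbar (F a (k i))) s) n) = P (\<Sum>i<s. k i)"
proof -
  define D where "D = (\<Sum>x\<in>a. x)"
  define N where "N = int (2*(n+1)*D + D + 1)"
  have NN: "N = 2 * int ((n+1)*D) + int D + 1" unfolding N_def by simp
  show ?thesis
  proof (intro exI[of _ "\<lambda>K. q a K n"] exI[of _ N] allI impI)
    fix s :: nat and k :: "nat \<Rightarrow> nat"
    assume kN: "\<forall>i<s. N \<le> int (k i)"
    have kb: "\<forall>i<s. int (k i) > 2 * int ((n+1) * D) + int D"
    proof (intro allI impI)
      fix i assume "i < s"
      then have "N \<le> int (k i)" using kN by blast
      then show "int (k i) > 2 * int ((n+1) * D) + int D" using NN by linarith
    qed
    have num: "of_nat (num_indep (disj_union (\<lambda>i. Fbar (F a (k i))) s) n)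
       = ZZ (verts (disj_union (\<lambda>i. Fbar (F a (k i))) s)) (adj (disj_union (\<lambda>i. Fbar (F a (k i))) s)) {} n"
      unfolding num_indep_def independent_set_def ZZ_def indepG_def by simp
    show "of_nat (num_indep (disj_union (\<lambda>i. Fbar (F a (k i))) s) n) = q a (\<Sum>i<s. k i) n"
      using num main_count[OF assms(1) assms(2) D_def kb, of n] by simp
  qed
qed

end
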